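(* Let $f:[0,1]\to\mathbb{R}$ with $f(0),f(1)\in\mathbb{Z}$, and let $n\in\mathbb{N}_+$, $n\ge 3$. Set, for $x\in[0,1]$, \[ \Phi_n(x):=(n+1)\int_0^1 \left(t^2+(1-t)^2\right)\frac{(nx-3)t^2(1-t)^{n-2}-(nx-2)t^3(1-t)^{n-3}+t^{nx}(1-t)^{n(1-x)}}{(1-2t)^2}\,dt. \] (a) If $f(x)-\Phi_n(x)$ is convex on $[0,1]$, then $\widetilde{B}_n(f)$ and $\widehat{B}_n(f)$ are convex on $[0,1]$. (b) If $f(x)+\Phi_n(x)$ is concave on $[0,1]$, then $\widetilde{B}_n(f)$ and $\widehat{B}_n(f)$ are concave on $[0,1]$.
   Context: For $n\in\mathbb{N}_+$ and $f:[0,1]\to\mathbb{R}$, define $\widetilde{B}_n(f)(x):=\sum_{k=0}^n \left[f\left(\frac{k}{n}\right)\binom{n}{k}\right]x^k(1-x)^{n-k}$, where $[\alpha]$ is the largest integer $\le\alpha$, and $\widehat{B}_n(f)(x):=\sum_{k=0}^n \left\langle f\left(\frac{k}{n}\right)\binom{n}{k}\right\rangle x^k(1-x)^{n-k}$, where $\langle\alpha\rangle$ is the integer nearest to $\alpha$ (when $\alpha$ is a half-integer, $\langle\alpha\rangle$ may be either neighbouring integer, chosen arbitrarily; the result holds for any such choice). *)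

theory Defs
  imports "HOL-Analysis.Analysis"
begin

definition bern_form :: "nat \<Rightarrow> (nat \<Rightarrow> real) \<Rightarrow> real \<Rightarrow> real" where
  "bern_form n c x = (\<Sum>k=0..n. c k * x ^ k * (1 - x) ^ (n - k))"

definition B_tilde :: "nat \<Rightarrow> (real \<Rightarrow> real) \<Rightarrow> real \<Rightarrow> real" where
  "B_tilde n f = bern_form n (\<lambda>k. of_int \<lfloor>f (real k / real n) * real (n choose k)\<rfloor>)"

definition nearest_choice :: "nat \<Rightarrow> (real \<Rightarrow> real) \<Rightarrow> (nat \<Rightarrow> int) \<Rightarrow> bool" where
  "nearest_choice n f r \<longleftrightarrow>
     (\<forall>k\<le>n. \<bar>f (real k / real n) * real (n choose k) - of_int (r k)\<bar> \<le> 1/2)"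

definition B_hat :: "nat \<Rightarrow> (nat \<Rightarrow> int) \<Rightarrow> real \<Rightarrow> real" where
  "B_hat n r = bern_form n (\<lambda>k. of_int (r k))"

definition Phi :: "nat \<Rightarrow> real \<Rightarrow> real" where
  "Phi n x = (real n + 1) * integral {0..1} (\<lambda>t.
      (t^2 + (1 - t)^2) *
      (((real n * x - 3) * t^2 * (1 - t)^(n - 2) - (real n * x - 2) * t^3 * (1 - t)^(n - 3)
        + t powr (real n * x) * (1 - t) powr (real n * (1 - x))) / (1 - 2 * t)^2))"

end

theory Submission imports Defs begin

lemma Bernstein_deriv:
  "(Bernstein (Suc m) k has_real_derivative
     real (Suc m) * ((if k = 0 then 0 else Bernstein m (k-1) x) - Bernstein m k x)) (at x)"
proof (cases k)
  case 0
  show ?thesis unfolding 0 Bernstein_def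
    apply (rule derivative_eq_intros refl)+
    apply simp
    done
next
  case (Suc j)
  define c where "c = real (Suc m choose Suc j)"
  have d1: "((\<lambda>x::real. c * x^Suc j * (1-x)^(m-j)) has_real_derivative
   c * (real (Suc j) * (x^j * (1-x)^(m-j)) - real (m-j) * (x^Suc j * (1-x)^(m-j-1)))) (at x)"
    by (rule derivative_eq_intros refl)+ (simp add: algebra_simps)
  have e1: "c * real (Suc j) = real (Suc m) * real (m choose j)"
    unfolding c_def by (metis Suc_times_binomial mult.commute of_nat_mult)
  have e2: "c * real (m - j) = real (Suc m) * real (m choose Suc j)"
    unfolding c_def using binomial_absorb_comp[of "Suc m" "Suc j"]
    by (metis diff_Suc_Suc diff_Suc_1 mult.commute of_nat_mult)
  have "c * (real (Suc j) * (x^j * (1-x)^(m-j)) - real (m-j) * (x^Suc j * (1-x)^(m-j-1)))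
      = (c * real (Suc j)) * (x^j * (1-x)^(m-j)) - (c * real (m-j)) * (x^Suc j * (1-x)^(m-j-1))"
    by (simp only: right_diff_distrib mult.assoc)
  also have "\<dots> = real (Suc m) * (Bernstein m j x - Bernstein m (Suc j) x)"
    unfolding e1 e2 Bernstein_def by (simp add: algebra_simps)
  finally have "c * (real (Suc j) * (x^j * (1-x)^(m-j)) - real (m-j) * (x^Suc j * (1-x)^(m-j-1)))
     = real (Suc m) * (Bernstein m j x - Bernstein m (Suc j) x)" .
  with d1 show ?thesis unfolding Suc Bernstein_def c_def by simp
qed

definition bp :: "nat \<Rightarrow> (nat \<Rightarrow> real) \<Rightarrow> real \<Rightarrow> real" where
  "bp m b x = (\<Sum>k\<le>m. b k * Bernstein m k x)"

lemma bp_deriv: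
  "(bp (Suc m) b has_real_derivative real (Suc m) * bp m (\<lambda>k. b (Suc k) - b k) x) (at x)"
proof -
  define M where "M = real (Suc m)"
  define I where "I k = (if k = 0 then 0 else Bernstein m (k-1) x)" for k
  have "(bp (Suc m) b has_real_derivative
      (\<Sum>k\<le>Suc m. b k * (M * (I k - Bernstein m k x)))) (at x)"
    unfolding bp_def[abs_def] M_def I_def
    by (rule DERIV_sum DERIV_cmult Bernstein_deriv)+
  moreover have e2: "(\<Sum>k\<le>Suc m. b k * (M * (I k - Bernstein m k x)))
     = M * ((\<Sum>k\<le>Suc m. b k * I k) - (\<Sum>k\<le>Suc m. b k * Bernstein m k x))"
    by (simp add: sum_distrib_left sum_subtractf algebra_simps)
  moreover have e3: "(\<Sum>k\<le>Suc m. b k * I k) = (\<Sum>k\<le>m. b (Suc k) * Bernstein m k x)"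
    by (subst sum.atMost_Suc_shift) (simp add: I_def)
  moreover have e4: "(\<Sum>k\<le>Suc m. b k * Bernstein m k x) = (\<Sum>k\<le>m. b k * Bernstein m k x)"
    by (simp add: Bernstein_def)
  moreover have "M * ((\<Sum>k\<le>m. b (Suc k) * Bernstein m k x) - (\<Sum>k\<le>m. b k * Bernstein m k x))
     = M * bp m (\<lambda>k. b (Suc k) - b k) x"
    by (simp add: bp_def sum_subtractf left_diff_distrib)
  ultimately show ?thesis
    unfolding M_def by (simp only:)
qed

lemma bp_nonneg: "(\<And>k. k \<le> m \<Longrightarrow> b k \<ge> 0) \<Longrightarrow> 0 \<le> x \<Longrightarrow> x \<le> 1 \<Longrightarrow> bp m b x \<ge> 0"
  unfolding bp_def by (intro sum_nonneg mult_nonneg_nonneg Bernstein_nonneg) auto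

lemma bp_convex:
  assumes "\<And>k. k \<le> m \<Longrightarrow> b k - 2 * b (Suc k) + b (Suc (Suc k)) \<ge> 0"
  shows "convex_on {0..1} (bp (Suc (Suc m)) b)"
proof (rule convex_on_realI)
  define b1 where "b1 k = b (Suc k) - b k" for k
  define b2 where "b2 k = b1 (Suc k) - b1 k" for k
  define F' where "F' x = real (Suc (Suc m)) * bp (Suc m) b1 x" for x
  show "connected {0..1::real}" by simp
  show "\<And>x. x \<in> {0..1} \<Longrightarrow> (bp (Suc (Suc m)) b has_real_derivative F' x) (at x)"
    unfolding F'_def b1_def by (rule bp_deriv)
  have dF': "(F' has_real_derivative real (Suc (Suc m)) * (real (Suc m) * bp m b2 x)) (at x)" for x
    unfolding F'_def[abs_def] b2_def by (intro DERIV_cmult bp_deriv)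
  have b2nn: "b2 k \<ge> 0" if "k \<le> m" for k using assms[OF that] by (simp add: b2_def b1_def)
  have nn: "0 \<le> real (Suc (Suc m)) * (real (Suc m) * bp m b2 x)" if "0 \<le> x" "x \<le> 1" for x
    using that b2nn by (intro mult_nonneg_nonneg bp_nonneg) auto
  show "F' x \<le> F' y" if "x \<in> {0..1}" "y \<in> {0..1}" "x \<le> y" for x y
    by (rule deriv_nonneg_imp_mono[OF dF']) (use that nn in auto)
qed

lemma bern_form_bp: "bern_form n c x = bp n (\<lambda>k. c k / real (n choose k)) x"
  unfolding bern_form_def bp_def Bernstein_def
  by (auto simp: atLeast0AtMost intro!: sum.cong)

lemma bern_convex:
  assumes "2 \<le> n"
    and "\<And>k. k + 2 \<le> n \<Longrightarrow> c k / real (n choose k) - 2 * (c (k+1) / real (n choose (k+1)))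
           + c (k+2) / real (n choose (k+2)) \<ge> 0"
  shows "convex_on {0..1} (bern_form n c)"
proof -
  obtain m where n: "n = Suc (Suc m)" using assms(1) by (metis add_2_eq_Suc le_Suc_ex)
  have "convex_on {0..1} (bp n (\<lambda>k. c k / real (n choose k)))"
    unfolding n by (rule bp_convex) (use assms(2) in \<open>auto simp: n\<close>)
  then show ?thesis by (simp add: bern_form_bp[abs_def])
qed


lemma beta_int:
  "((\<lambda>t. t^a * (1-t)^b) has_integral (fact a * fact b / fact (a+b+1))) {0..1::real}"
proof -
  have "((\<lambda>t. t powr (real a + 1 - 1) * (1 - t) powr (real b + 1 - 1)) has_integral
        Beta (real a + 1) (real b + 1)) {0..1}"
    by (rule has_integral_Beta_real) auto
  moreover have "Beta (real a + 1) (real b + 1) = fact a * fact b / fact (a+b+1)"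
  proof -
    have "real a + 1 + (real b + 1) = 1 + real (a+b+1)" by simp
    then show ?thesis unfolding Beta_def
      using Gamma_fact[of a, where 'a=real] Gamma_fact[of b, where 'a=real]
        Gamma_fact[of "a+b+1", where 'a=real]
      by (simp add: add.commute)
  qed
  ultimately have "((\<lambda>t. t powr (real a) * (1 - t) powr (real b)) has_integral
        (fact a * fact b / fact (a+b+1))) {0..1}" by simp
  then show ?thesis
    by (rule has_integral_spike_finite[where S="{0,1}", rotated 2]) (auto simp: powr_realpow)
qed

lemma beta_binom:
  assumes "a + b = n"
  shows "real (Suc n) * (fact a * fact b / fact (a+b+1)) = 1 / real (n choose a)"
proof -
  have "fact a * fact b * real (n choose a) = fact n"
    using binomial_fact_lemma[of a n] assms by (metis add_diff_cancel_left' le_add1 of_nat_fact of_nat_mult)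
  moreover have "fact (a+b+1) = real (Suc n) * fact n" using assms by simp
  moreover have "real (n choose a) > 0" using assms by simp
  moreover have "(fact a :: real) > 0" "(fact b :: real) > 0" by auto
  ultimately show ?thesis by (simp add: field_simps del: fact_Suc of_nat_Suc)
qed

definition NN :: "nat \<Rightarrow> nat \<Rightarrow> real \<Rightarrow> real" where
  "NN n j t = (real j - 3) * t^2 * (1 - t)^(n - 2) - (real j - 2) * t^3 * (1 - t)^(n - 3)
        + t^j * (1 - t)^(n - j)"

definition hh :: "nat \<Rightarrow> nat \<Rightarrow> real \<Rightarrow> real" where
  "hh n j t = (t^2 + (1 - t)^2) * (NN n j t / (1 - 2 * t)^2)"

lemma Phi_eq:
  assumes "0 < n" "j \<le> n"
  shows "Phi n (real j / real n) = (real n + 1) * integral {0..1} (hh n j)"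
proof -
  have "integral {0..1} (hh n j) = integral {0..1} (\<lambda>t.
      (t^2 + (1 - t)^2) *
      (((real n * (real j / real n) - 3) * t^2 * (1 - t)^(n - 2) - (real n * (real j / real n) - 2) * t^3 * (1 - t)^(n - 3)
        + t powr (real n * (real j / real n)) * (1 - t) powr (real n * (1 - (real j / real n)))) / (1 - 2 * t)^2))"
  proof (rule integral_spike[where S="{0,1}"])
    show "negligible {0,1::real}" by simp
    fix t assume t: "t \<in> {0..1} - {0,1::real}"
    have e1: "real n * (real j / real n) = real j" using assms by simp
    have e2: "real n * (1 - real j / real n) = real (n - j)" using assms by (simp add: of_nat_diff field_simps)
    show "(t^2 + (1 - t)^2) *
      (((real n * (real j / real n) - 3) * t^2 * (1 - t)^(n - 2) - (real n * (real j / real n) - 2) * t^3 * (1 - t)^(n - 3)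
        + t powr (real n * (real j / real n)) * (1 - t) powr (real n * (1 - (real j / real n)))) / (1 - 2 * t)^2)
       = hh n j t"
      unfolding e1 e2 hh_def NN_def using t by (simp add: powr_realpow)
  qed
  then show ?thesis unfolding Phi_def by simp
qed

lemma NN_rec:
  assumes "j + 2 \<le> n"
  shows "NN n (j+2) t = 2 * NN n (j+1) t - NN n j t + (1 - 2*t)^2 * (t^j * (1-t)^(n-j-2))"
proof -
  obtain m where n: "n = j + 2 + m" using assms le_Suc_ex by blast
  have a: "n - j = m + 2" "n - (j+1) = m + 1" "n - (j+2) = m" "n - j - 2 = m" using n by auto
  show ?thesis unfolding NN_def a by (simp add: power_add algebra_simps power2_eq_square)
qed

lemma hh_rec:
  assumes "j + 2 \<le> n" "t \<noteq> 1/2"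
  shows "hh n (j+2) t = 2 * hh n (j+1) t - hh n j t + (t^2 + (1-t)^2) * (t^j * (1-t)^(n-j-2))"
proof -
  have D: "(1 - 2*t)^2 \<noteq> 0" using assms(2) by simp
  show ?thesis unfolding hh_def NN_rec[OF assms(1)] using D
    by (simp add: field_simps)
qed

lemma NN_0:
  assumes "3 \<le> n"
  shows "NN n 0 t = (1 - 2*t)^2 * (2 * t * (1-t)^(n-3) + (1-t)^(n-2))"
proof -
  obtain m where n: "n = m + 3" using assms le_Suc_ex by (metis add.commute)
  have a: "n - 2 = m + 1" "n - 3 = m" "n - 0 = m + 3" using n by auto
  show ?thesis unfolding NN_def a by (simp add: power_add algebra_simps power2_eq_square power3_eq_cube)
qed

lemma NN_1:
  assumes "3 \<le> n"
  shows "NN n 1 t = (1 - 2*t)^2 * (t * (1-t)^(n-3))"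
proof -
  obtain m where n: "n = m + 3" using assms le_Suc_ex by (metis add.commute)
  have a: "n - 2 = m + 1" "n - 3 = m" "n - 1 = m + 2" using n by auto
  show ?thesis unfolding NN_def a by (simp add: power_add algebra_simps power2_eq_square power3_eq_cube)
qed

lemma aux: "(c::real) \<noteq> 0 \<Longrightarrow> c * x = y \<Longrightarrow> x = y / c"
  by (simp add: field_simps)

lemma W_int:
  assumes "k + 2 \<le> n"
  shows "((\<lambda>t. (t^2 + (1-t)^2) * (t^k * (1-t)^(n-k-2))) has_integral
          (1 / real (n choose k) + 1 / real (n choose (k+2))) / (real n + 1)) {0..1}"
proof -
  obtain m where n: "n = k + 2 + m" using assms le_Suc_ex by blast
  have a: "n - k - 2 = m" using n by simp
  have i1: "((\<lambda>t. t^(k+2) * (1-t)^m) has_integral (fact (k+2) * fact m / fact (k+2+m+1))) {0..1::real}"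
    by (rule beta_int)
  have i2: "((\<lambda>t. t^k * (1-t)^(m+2)) has_integral (fact k * fact (m+2) / fact (k+(m+2)+1))) {0..1::real}"
    by (rule beta_int)
  have v1: "real (Suc n) * (fact (k+2) * fact m / fact (k+2+m+1)) = 1 / real (n choose (k+2))"
    by (rule beta_binom) (simp add: n)
  have v2: "real (Suc n) * (fact k * fact (m+2) / fact (k+(m+2)+1)) = 1 / real (n choose k)"
    by (rule beta_binom) (simp add: n)
  have "((\<lambda>t. t^(k+2) * (1-t)^m + t^k * (1-t)^(m+2)) has_integral
     (fact (k+2) * fact m / fact (k+2+m+1) + fact k * fact (m+2) / fact (k+(m+2)+1))) {0..1::real}"
    by (rule has_integral_add[OF i1 i2])
  moreover have "fact (k+2) * fact m / fact (k+2+m+1) + fact k * fact (m+2) / fact (k+(m+2)+1)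
      = (1 / real (n choose k) + 1 / real (n choose (k+2))) / (real n + 1)"
    using aux[OF _ v1] aux[OF _ v2] by (simp add: add_divide_distrib add.commute)
  moreover have "(\<lambda>t::real. t^(k+2) * (1-t)^m + t^k * (1-t)^(m+2))
     = (\<lambda>t. (t^2 + (1-t)^2) * (t^k * (1-t)^(n-k-2)))"
    unfolding a by (auto simp: power_add algebra_simps power2_eq_square)
  ultimately show ?thesis by simp
qed

lemma hh_int:
  assumes "3 \<le> n"
  shows "j \<le> n \<Longrightarrow> hh n j integrable_on {0..1}"
proof (induction j rule: less_induct)
  case (less j)
  show ?case
  proof (cases j)
    case 0
    have "(\<lambda>t::real. (t^2 + (1-t)^2) * (2 * t * (1-t)^(n-3) + (1-t)^(n-2))) integrable_on {0..1}"
      by (intro integrable_continuous_interval continuous_intros)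
    then show ?thesis
      by (rule integrable_spike_finite[where S="{1/2}", rotated 2])
         (auto simp: 0 hh_def NN_0[OF assms])
  next
    case (Suc i)
    show ?thesis
    proof (cases i)
      case 0
      have "(\<lambda>t::real. (t^2 + (1-t)^2) * (t * (1-t)^(n-3))) integrable_on {0..1}"
        by (intro integrable_continuous_interval continuous_intros)
      then show ?thesis
        by (rule integrable_spike_finite[where S="{1/2}", rotated 2])
           (auto simp: Suc 0 hh_def NN_1[OF assms, unfolded One_nat_def])
    next
      case (Suc l)
      have j: "j = l + 2" using \<open>j = Suc i\<close> Suc by simp
      have h1: "hh n (l+1) integrable_on {0..1}" using less j by simp
      have h0: "hh n l integrable_on {0..1}" using less j by simp
      have "((\<lambda>t. 2 * hh n (l+1) t - hh n l t + (t^2 + (1-t)^2) * (t^l * (1-t)^(n-l-2))) has_integral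
          (2 * integral {0..1} (hh n (l+1)) - integral {0..1} (hh n l) +
            (1 / real (n choose l) + 1 / real (n choose (l+2))) / (real n + 1))) {0..1}"
        by (intro has_integral_add has_integral_diff has_integral_mult_right W_int integrable_integral h0 h1)
          (use less j in simp)
      then show ?thesis unfolding j
        by (intro has_integral_integrable[OF has_integral_spike_finite[where S="{1/2}", rotated 2]])
           (use less j hh_rec in auto)
    qed
  qed
qed

lemma Phi_diff:
  assumes "3 \<le> n" "k + 2 \<le> n"
  shows "Phi n (real k / real n) - 2 * Phi n (real (k+1) / real n) + Phi n (real (k+2) / real n)
     = 1 / real (n choose k) + 1 / real (n choose (k+2))"
proof -
  define I where "I j = integral {0..1} (hh n j)" for j
  define S where "S = 1 / real (n choose k) + 1 / real (n choose (k+2))"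
  have h1: "hh n (k+1) integrable_on {0..1}" using hh_int assms by simp
  have h0: "hh n k integrable_on {0..1}" using hh_int assms by simp
  have h2: "hh n (k+2) integrable_on {0..1}" using hh_int assms by simp
  have "((\<lambda>t. 2 * hh n (k+1) t - hh n k t + (t^2 + (1-t)^2) * (t^k * (1-t)^(n-k-2))) has_integral
      (2 * I (k+1) - I k + (1 / real (n choose k) + 1 / real (n choose (k+2))) / (real n + 1))) {0..1}"
    unfolding I_def
    by (intro has_integral_add has_integral_diff has_integral_mult_right W_int integrable_integral h0 h1)
      (use assms in simp)
  then have "(hh n (k+2) has_integral
      (2 * I (k+1) - I k + (1 / real (n choose k) + 1 / real (n choose (k+2))) / (real n + 1))) {0..1}"
    by (rule has_integral_spike_finite[where S="{1/2}", rotated 2]) (use assms hh_rec in auto)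
  then have "I (k+2) = 2 * I (k+1) - I k + (1 / real (n choose k) + 1 / real (n choose (k+2))) / (real n + 1)"
    unfolding I_def using h2 by (metis has_integral_unique integrable_integral)
  moreover have P: "Phi n (real j / real n) = (real n + 1) * I j" if "j \<le> n" for j
    unfolding I_def using Phi_eq[of n j] that assms by simp
  ultimately show ?thesis using assms P[of k] P[of "k+1"] P[of "k+2"]
    unfolding S_def[symmetric] by (simp add: field_simps)
qed


lemma frac_le:
  fixes p q r :: real
  assumes pos: "0 < p" "0 < q" "0 < r" and pr: "p * r \<le> q^2"
  shows "2 / q \<le> 1 / p + 1 / r"
proof -
  have "(2 * p * r)^2 \<le> (q * (p + r))^2"
  proof -
    have h4: "4 * (p * r) \<le> (p + r)^2"
    proof -
      have "0 \<le> (p - r)^2" by simp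
      then show ?thesis by (simp add: power2_eq_square algebra_simps)
    qed
    have "(2 * p * r)^2 = 4 * (p * r) * (p * r)" by (simp add: power2_eq_square)
    also have "\<dots> \<le> (p + r)^2 * q^2"
      apply (rule mult_mono[OF h4 pr])
      using pos by simp_all
    also have "\<dots> = (q * (p + r))^2" by (simp add: power_mult_distrib)
    finally show ?thesis .
  qed
  then have h: "2 * p * r \<le> q * (p + r)"
    apply (rule power2_le_imp_le)
    using pos by simp_all
  have "2 / q = (2 * p * r) / (q * (p * r))" using pos by (simp add: field_simps)
  also have "\<dots> \<le> (q * (p + r)) / (q * (p * r))"
    using h pos by (intro divide_right_mono) simp_all
  also have "\<dots> = 1 / p + 1 / r" using pos by (simp add: field_simps)
  finally show ?thesis .
qed
lemma binom_ineq:
  assumes "k + 2 \<le> n"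
  shows "2 / real (n choose (k+1)) \<le> 1 / real (n choose k) + 1 / real (n choose (k+2))"
proof -
  define p where "p = real (n choose k)"
  define q where "q = real (n choose (k+1))"
  define r where "r = real (n choose (k+2))"
  have pos: "p > 0" "q > 0" "r > 0" using assms by (auto simp: p_def q_def r_def)
  have nq: "q * real (k+1) = p * real (n-k)"
  proof -
    have "Suc k * (n choose Suc k) = (n - k) * (n choose k)"
      using binomial_absorption[of k n] binomial_absorb_comp[of n k] by simp
    then show ?thesis unfolding p_def q_def by (metis Suc_eq_plus1 mult.commute of_nat_mult)
  qed
  have nr: "r * real (k+2) = q * real (n-(k+1))"
  proof -
    have "Suc (Suc k) * (n choose Suc (Suc k)) = (n - Suc k) * (n choose Suc k)"
      using binomial_absorption[of "Suc k" n] binomial_absorb_comp[of n "Suc k"] by simp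
    then show ?thesis unfolding r_def q_def
      by (metis add_2_eq_Suc' Suc_eq_plus1 mult.commute of_nat_mult)
  qed
  have kn: "real (n - k) = real n - real k" "real (n - (k+1)) = real n - real k - 1"
    using assms by (auto simp: of_nat_diff)
  have pr: "p * r \<le> q^2"
  proof -
    have p': "p = q * (real k + 1) / (real n - real k)" using nq kn assms pos
      by (simp add: field_simps)
    have r': "r = q * (real n - real k - 1) / (real k + 2)" using nr kn assms pos
      by (simp add: field_simps)
    have "(real k + 1) * (real n - real k - 1) \<le> (real n - real k) * (real k + 2)"
      by (simp add: algebra_simps)
    then have "(real k + 1) * (real n - real k - 1) / ((real n - real k) * (real k + 2)) \<le> 1"
      using assms by (simp add: divide_le_eq_1)
    then have "q^2 * ((real k + 1) * (real n - real k - 1) / ((real n - real k) * (real k + 2))) \<le> q^2"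
      using mult_left_mono[of _ 1 "q^2"] by fastforce
    then show ?thesis unfolding p' r' by (simp add: power2_eq_square mult_ac)
  qed
  show ?thesis using frac_le[OF pos pr] unfolding p_def q_def r_def .
qed

lemma lin1: "(y::real) \<le> (1 - 1 / 2) * x + 1 / 2 * z \<Longrightarrow> 0 \<le> x - 2 * y + z"
  by (simp add: field_simps)

lemma lin2: "(s::real) \<le> fa - 2 * fb + fc \<Longrightarrow> fa - ca - 2 * (fb - cb) + (fc - cc) \<le> s \<Longrightarrow> 0 \<le> ca - 2 * cb + cc"
  by (simp add: algebra_simps)

lemma convex_second_diff:
  fixes g :: "real \<Rightarrow> real" and n k :: nat
  assumes "convex_on {0..1} g" "0 < n" "k + 2 \<le> n"
  shows "g (real k / real n) - 2 * g (real (k+1) / real n) + g (real (k+2) / real n) \<ge> 0"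
proof -
  have x1: "real k / real n \<in> {0..1}" using assms by (simp add: divide_le_eq_1)
  have x2: "real (k+2) / real n \<in> {0..1}" using assms by (simp add: divide_le_eq_1 del: of_nat_add)
  have H: "g ((1 - 1/2) *\<^sub>R (real k / real n) + (1/2) *\<^sub>R (real (k+2) / real n))
      \<le> (1 - 1/2) * g (real k / real n) + (1/2) * g (real (k+2) / real n)"
    by (rule convex_onD[OF assms(1)]) (use x1 x2 in auto)
  have m: "(1 - 1/2) *\<^sub>R (real k / real n) + (1/2) *\<^sub>R (real (k+2) / real n) = real (k+1) / real n"
    using assms by (simp add: field_simps)
  have "g (real (k+1) / real n) \<le> (1 - 1/2) * g (real k / real n) + (1/2) * g (real (k+2) / real n)"
    using H unfolding m .
  then show ?thesis by (rule lin1)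
qed

lemma conv_from_bounds:
  fixes f :: "real \<Rightarrow> real" and c :: "nat \<Rightarrow> real" and n :: nat
  defines "S \<equiv> \<lambda>k. 1 / real (n choose k) + 1 / real (n choose (k+2))"
  defines "e \<equiv> \<lambda>k. f (real k / real n) - c k / real (n choose k)"
  assumes "2 \<le> n"
    and "\<And>k. k + 2 \<le> n \<Longrightarrow> f (real k / real n) - 2 * f (real (k+1) / real n) + f (real (k+2) / real n) \<ge> S k"
    and "\<And>k. k + 2 \<le> n \<Longrightarrow> e k - 2 * e (k+1) + e (k+2) \<le> S k"
  shows "convex_on {0..1} (bern_form n c)"
proof (rule bern_convex[OF assms(3)])
  fix k assume k: "k + 2 \<le> n"
  show "0 \<le> c k / real (n choose k) - 2 * (c (k + 1) / real (n choose (k + 1))) +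
           c (k + 2) / real (n choose (k + 2))"
  proof -
    have E: "f (real k / real n) - c k / real (n choose k) -
       2 * (f (real (k+1) / real n) - c (k+1) / real (n choose (k+1))) +
       (f (real (k+2) / real n) - c (k+2) / real (n choose (k+2))) \<le> S k"
      using assms(5)[OF k] unfolding e_def .
    show ?thesis using lin2[OF assms(4)[OF k] E] .
  qed
qed

lemma bern_form_neg: "bern_form n (\<lambda>k. - c k) x = - bern_form n c x"
  unfolding bern_form_def by (simp add: sum_negf)

lemma floor_err:
  assumes "k \<le> n"
  shows "0 \<le> f (real k / real n) - of_int \<lfloor>f (real k / real n) * real (n choose k)\<rfloor> / real (n choose k)"
    "f (real k / real n) - of_int \<lfloor>f (real k / real n) * real (n choose k)\<rfloor> / real (n choose k) \<le> 1 / real (n choose k)"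
proof -
  define C where "C = real (n choose k)"
  define y where "y = f (real k / real n)"
  have C: "C > 0" using assms by (simp add: C_def)
  have a: "of_int \<lfloor>y * C\<rfloor> \<le> y * C" "y * C - 1 \<le> of_int \<lfloor>y * C\<rfloor>" by linarith+
  have eq: "y - of_int \<lfloor>y * C\<rfloor> / C = (y * C - of_int \<lfloor>y * C\<rfloor>) / C" using C by (simp add: field_simps)
  have "0 \<le> (y * C - of_int \<lfloor>y * C\<rfloor>) / C" using a C by simp
  moreover have "(y * C - of_int \<lfloor>y * C\<rfloor>) / C \<le> 1 / C"
    by (rule divide_right_mono) (use a C in linarith, use C in simp)
  ultimately show "0 \<le> f (real k / real n) - of_int \<lfloor>f (real k / real n) * real (n choose k)\<rfloor> / real (n choose k)"
    "f (real k / real n) - of_int \<lfloor>f (real k / real n) * real (n choose k)\<rfloor> / real (n choose k) \<le> 1 / real (n choose k)"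
    using eq unfolding C_def[symmetric] y_def[symmetric] by simp_all
qed

lemma near_err:
  assumes "k \<le> n" "nearest_choice n f r"
  shows "\<bar>f (real k / real n) - of_int (r k) / real (n choose k)\<bar> \<le> 1 / (2 * real (n choose k))"
proof -
  define C where "C = real (n choose k)"
  define y where "y = f (real k / real n)"
  have C: "C > 0" using assms by (simp add: C_def)
  have a: "\<bar>y * C - of_int (r k)\<bar> \<le> 1/2" using assms unfolding nearest_choice_def C_def y_def by auto
  have "y - of_int (r k) / C = (y * C - of_int (r k)) / C" using C by (simp add: field_simps)
  then have "\<bar>y - of_int (r k) / C\<bar> = \<bar>y * C - of_int (r k)\<bar> / C" using C by simp
  also have "\<dots> \<le> (1/2) / C" by (rule divide_right_mono) (use a C in auto)
  finally show ?thesis unfolding C_def y_def by simp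
qed

lemma lin3: "0 \<le> (a::real) \<Longrightarrow> a \<le> A \<Longrightarrow> 0 \<le> b \<Longrightarrow> b \<le> B \<Longrightarrow> 0 \<le> c \<Longrightarrow> c \<le> C \<Longrightarrow> a - 2 * b + c \<le> A + C"
  by linarith

lemma lin4: "0 \<le> - (a::real) \<Longrightarrow> - a \<le> A \<Longrightarrow> 0 \<le> - b \<Longrightarrow> - b \<le> B \<Longrightarrow> 0 \<le> - c \<Longrightarrow> - c \<le> C \<Longrightarrow> 2 * B \<le> A + C \<Longrightarrow> a - 2 * b + c \<le> A + C"
  by linarith

lemma lin5: "(a::real) \<le> A / 2 \<Longrightarrow> - a \<le> A / 2 \<Longrightarrow> b \<le> B / 2 \<Longrightarrow> - b \<le> B / 2 \<Longrightarrow> c \<le> C / 2 \<Longrightarrow> - c \<le> C / 2 \<Longrightarrow> 2 * B \<le> A + C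
   \<Longrightarrow> a - 2 * b + c \<le> A + C"
  by linarith

lemma lin6: "0 \<le> ((fa::real) - pa) - 2 * (fb - pb) + (fc - pc) \<Longrightarrow> pa - 2 * pb + pc = s \<Longrightarrow> s \<le> fa - 2 * fb + fc"
  by (smt (verit))

lemma lin7: "0 \<le> - ((fa::real) + pa) - 2 * (- (fb + pb)) + (- (fc + pc)) \<Longrightarrow> pa - 2 * pb + pc = s \<Longrightarrow> s \<le> (- fa) - 2 * (- fb) + (- fc)"
  by (smt (verit))

theorem theorem1p10:
  fixes f :: "real \<Rightarrow> real" and n :: nat
  assumes "f 0 \<in> \<int>" and "f 1 \<in> \<int>" and "n \<ge> 3"
  shows "(convex_on {0..1} (\<lambda>x. f x - Phi n x) \<longrightarrow>
            convex_on {0..1} (B_tilde n f) \<and>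
            (\<forall>r. nearest_choice n f r \<longrightarrow> convex_on {0..1} (B_hat n r)))
       \<and> (concave_on {0..1} (\<lambda>x. f x + Phi n x) \<longrightarrow>
            concave_on {0..1} (B_tilde n f) \<and>
            (\<forall>r. nearest_choice n f r \<longrightarrow> concave_on {0..1} (B_hat n r)))"
proof -
  define fv where "fv = (\<lambda>k. f (real k / real n))"
  define C where "C = (\<lambda>k. real (n choose k))"
  have n2: "2 \<le> n" "0 < n" using assms(3) by auto
  have PD: "Phi n (real k / real n) - 2 * Phi n (real (k+1) / real n) + Phi n (real (k+2) / real n)
      = 1 / C k + 1 / C (k+2)"
    if "k + 2 \<le> n" for k
    unfolding C_def using Phi_diff[OF assms(3) that] .
  have BI: "2 * (1 / C (k+1)) \<le> 1 / C k + 1 / C (k+2)" if "k + 2 \<le> n" for k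
    unfolding C_def using binom_ineq[OF that] by simp
  define ef where "ef = (\<lambda>k. fv k - of_int \<lfloor>fv k * C k\<rfloor> / C k)"
  have ef: "0 \<le> ef k" "ef k \<le> 1 / C k" if "k \<le> n" for k
    using floor_err[OF that, of f] unfolding ef_def fv_def C_def by auto
  define ef' where "ef' = (\<lambda>k. (- fv k) - (- of_int \<lfloor>fv k * C k\<rfloor>) / C k)"
  have ef': "0 \<le> - ef' k" "- ef' k \<le> 1 / C k" if "k \<le> n" for k
    using ef[OF that] unfolding ef'_def ef_def by auto
  define er where "er = (\<lambda>r k. fv k - of_int (r k) / C k)"
  have er: "\<bar>er r k\<bar> \<le> 1 / (2 * C k)" if "k \<le> n" "nearest_choice n f r" for k r
    using near_err[OF that] unfolding er_def fv_def C_def by auto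
  have er2: "er r k \<le> (1 / C k) / 2" "- er r k \<le> (1 / C k) / 2" if "k \<le> n" "nearest_choice n f r" for k r
    using er[OF that] by (simp_all add: abs_le_iff)
  define er' where "er' = (\<lambda>r k. (- fv k) - (- of_int (r k)) / C k)"
  have er2': "er' r k \<le> (1 / C k) / 2" "- er' r k \<le> (1 / C k) / 2" if "k \<le> n" "nearest_choice n f r" for k r
    using er2[OF that] unfolding er'_def er_def by auto
  have conc_iff: "concave_on {0..1} (bern_form n c) \<longleftrightarrow> convex_on {0..1} (bern_form n (\<lambda>k. - c k))" for c
    unfolding concave_on_def bern_form_neg[abs_def] by simp
  have A: "convex_on {0..1} (B_tilde n f) \<and>
            (\<forall>r. nearest_choice n f r \<longrightarrow> convex_on {0..1} (B_hat n r))"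
    if cv: "convex_on {0..1} (\<lambda>x. f x - Phi n x)"
  proof -
    have D: "1 / C k + 1 / C (k+2) \<le> fv k - 2 * fv (k+1) + fv (k+2)" if "k + 2 \<le> n" for k
      using lin6[OF convex_second_diff[OF cv n2(2) that] PD[OF that]] unfolding fv_def .
    show ?thesis
    proof (intro conjI allI impI)
      show "convex_on {0..1} (B_tilde n f)"
        unfolding B_tilde_def
      proof (rule conv_from_bounds[OF n2(1)])
        fix k assume k: "k + 2 \<le> n"
        have kk: "k \<le> n" "k + 1 \<le> n" using k by auto
        from D[OF k] show "1 / real (n choose k) + 1 / real (n choose (k + 2))
            \<le> f (real k / real n) - 2 * f (real (k + 1) / real n) + f (real (k + 2) / real n)"
          unfolding fv_def C_def .
        from lin3[OF ef[OF kk(1)] ef[OF kk(2)] ef[OF k]]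
        show "f (real k / real n) - of_int \<lfloor>f (real k / real n) * real (n choose k)\<rfloor> / real (n choose k) -
          2 * (f (real (k + 1) / real n) - of_int \<lfloor>f (real (k + 1) / real n) * real (n choose (k + 1))\<rfloor> / real (n choose (k + 1))) +
          (f (real (k + 2) / real n) - of_int \<lfloor>f (real (k + 2) / real n) * real (n choose (k + 2))\<rfloor> / real (n choose (k + 2)))
          \<le> 1 / real (n choose k) + 1 / real (n choose (k + 2))"
          unfolding ef_def fv_def C_def .
      qed
    next
      fix r assume r: "nearest_choice n f r"
      show "convex_on {0..1} (B_hat n r)"
        unfolding B_hat_def
      proof (rule conv_from_bounds[OF n2(1)])
        fix k assume k: "k + 2 \<le> n"
        have kk: "k \<le> n" "k + 1 \<le> n" using k by auto
        from D[OF k] show "1 / real (n choose k) + 1 / real (n choose (k + 2))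
            \<le> f (real k / real n) - 2 * f (real (k + 1) / real n) + f (real (k + 2) / real n)"
          unfolding fv_def C_def .
        from lin5[OF er2[OF kk(1) r] er2[OF kk(2) r] er2[OF k r] BI[OF k]]
        show "f (real k / real n) - of_int (r k) / real (n choose k) -
          2 * (f (real (k + 1) / real n) - of_int (r (k + 1)) / real (n choose (k + 1))) +
          (f (real (k + 2) / real n) - of_int (r (k + 2)) / real (n choose (k + 2)))
          \<le> 1 / real (n choose k) + 1 / real (n choose (k + 2))"
          unfolding er_def fv_def C_def .
      qed
    qed
  qed
  have B: "concave_on {0..1} (B_tilde n f) \<and>
            (\<forall>r. nearest_choice n f r \<longrightarrow> concave_on {0..1} (B_hat n r))"
    if cc: "concave_on {0..1} (\<lambda>x. f x + Phi n x)"
  proof -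
    have cv: "convex_on {0..1} (\<lambda>x. - (f x + Phi n x))" using cc unfolding concave_on_def .
    have D: "1 / C k + 1 / C (k+2) \<le> (- fv k) - 2 * (- fv (k+1)) + (- fv (k+2))" if "k + 2 \<le> n" for k
      using lin7[OF convex_second_diff[OF cv n2(2) that] PD[OF that]] unfolding fv_def .
    show ?thesis
    proof (intro conjI allI impI)
      show "concave_on {0..1} (B_tilde n f)"
        unfolding B_tilde_def conc_iff
      proof (rule conv_from_bounds[OF n2(1), where f="\<lambda>x. - f x"])
        fix k assume k: "k + 2 \<le> n"
        have kk: "k \<le> n" "k + 1 \<le> n" using k by auto
        from D[OF k] show "1 / real (n choose k) + 1 / real (n choose (k + 2))
            \<le> (- f (real k / real n)) - 2 * (- f (real (k + 1) / real n)) + (- f (real (k + 2) / real n))"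
          unfolding fv_def C_def .
        from lin4[OF ef'[OF kk(1)] ef'[OF kk(2)] ef'[OF k] BI[OF k]]
        show "(- f (real k / real n)) - (- of_int \<lfloor>f (real k / real n) * real (n choose k)\<rfloor>) / real (n choose k) -
          2 * ((- f (real (k + 1) / real n)) - (- of_int \<lfloor>f (real (k + 1) / real n) * real (n choose (k + 1))\<rfloor>) / real (n choose (k + 1))) +
          ((- f (real (k + 2) / real n)) - (- of_int \<lfloor>f (real (k + 2) / real n) * real (n choose (k + 2))\<rfloor>) / real (n choose (k + 2)))
          \<le> 1 / real (n choose k) + 1 / real (n choose (k + 2))"
          unfolding ef'_def fv_def C_def .
      qed
    next
      fix r assume r: "nearest_choice n f r"
      show "concave_on {0..1} (B_hat n r)"
        unfolding B_hat_def conc_iff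
      proof (rule conv_from_bounds[OF n2(1), where f="\<lambda>x. - f x"])
        fix k assume k: "k + 2 \<le> n"
        have kk: "k \<le> n" "k + 1 \<le> n" using k by auto
        from D[OF k] show "1 / real (n choose k) + 1 / real (n choose (k + 2))
            \<le> (- f (real k / real n)) - 2 * (- f (real (k + 1) / real n)) + (- f (real (k + 2) / real n))"
          unfolding fv_def C_def .
        from lin5[OF er2'[OF kk(1) r] er2'[OF kk(2) r] er2'[OF k r] BI[OF k]]
        show "(- f (real k / real n)) - (- of_int (r k)) / real (n choose k) -
          2 * ((- f (real (k + 1) / real n)) - (- of_int (r (k + 1))) / real (n choose (k + 1))) +
          ((- f (real (k + 2) / real n)) - (- of_int (r (k + 2))) / real (n choose (k + 2)))
          \<le> 1 / real (n choose k) + 1 / real (n choose (k + 2))"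
          unfolding er'_def fv_def C_def .
      qed
    qed
  qed
  show ?thesis using A B by blast
qed

end
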